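(* Let $G$ be a group, $A\subseteq G$ a nonempty finite set and $\epsilon\in(0,1)$. Let $X=\operatorname{St}^\ell_{\epsilon^2/162}(A)$ and fix $\nu\in(0,1)$ with $\nu\leq|X|/|A|$. Set $S=\operatorname{St}^r_{\epsilon\nu/9}(A)$ and $A'=\{a\in A:|Xa\setminus A|<\frac{\epsilon}{9}|X|\}$. If $D\subseteq G$ satisfies $A'\subseteq D\subseteq A'S$, then $|A\triangle D|<\epsilon|A|$.
   Context: $Xa=\{xa:x\in X\}$, $A'S=\{as:a\in A',s\in S\}$, $\triangle$ symmetric difference. For finite $A$ and $\eta\in(0,1)$: $\operatorname{St}^\ell_\eta(A)=\{x\in G:|xA\triangle A|\leq\eta|A|\}$ and $\operatorname{St}^r_\eta(A)=\{x\in G:|Ax\triangle A|\leq\eta|A|\}$. *)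

theory Defs
  imports Complex_Main "HOL-Algebra.Coset"
begin

definition left_stab :: "('a, 'b) monoid_scheme \<Rightarrow> real \<Rightarrow> 'a set \<Rightarrow> 'a set" where
  "left_stab G eta A =
     {x \<in> carrier G. real (card ((x <#\<^bsub>G\<^esub> A) - A \<union> (A - (x <#\<^bsub>G\<^esub> A)))) \<le> eta * real (card A)}"

definition right_stab :: "('a, 'b) monoid_scheme \<Rightarrow> real \<Rightarrow> 'a set \<Rightarrow> 'a set" where
  "right_stab G eta A =
     {x \<in> carrier G. real (card ((A #>\<^bsub>G\<^esub> x) - A \<union> (A - (A #>\<^bsub>G\<^esub> x)))) \<le> eta * real (card A)}"

end

theory Submission
  imports Defs
begin

lemma double_count:
  assumes "finite X" "finite Y"
  shows "(\<Sum>x\<in>X. card {y\<in>Y. P x y}) = (\<Sum>y\<in>Y. card {x\<in>X. P x y})"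
proof -
  have c: "\<And>Z Q. finite Z \<Longrightarrow> card {z\<in>Z. Q z} = (\<Sum>z\<in>Z. if Q z then 1 else (0::nat))"
    proof -
    fix Z :: "'z set" and Q assume "finite Z"
    have "Z \<inter> Collect Q = {z\<in>Z. Q z}" by blast
    then show "card {z\<in>Z. Q z} = (\<Sum>z\<in>Z. if Q z then 1 else (0::nat))"
      using \<open>finite Z\<close> by (simp add: sum.If_cases)
  qed
  show ?thesis
    using assms by (simp add: c sum.swap[of _ X Y])
qed

context group
begin

lemma cnt_left:
  assumes "x \<in> carrier G" "A \<subseteq> carrier G"
  shows "card {a\<in>A. x \<otimes> a \<notin> A} = card ((x <# A) - A)"
proof -
  have "(x <# A) - A = (\<lambda>a. x \<otimes> a) ` {a\<in>A. x \<otimes> a \<notin> A}"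
    unfolding l_coset_def by auto
  moreover have "inj_on (\<lambda>a. x \<otimes> a) {a\<in>A. x \<otimes> a \<notin> A}"
    using assms by (auto simp: inj_on_def) (metis Units_eq Units_l_cancel subsetD)
  ultimately show ?thesis by (simp add: card_image)
qed

lemma cnt_right:
  assumes "a \<in> carrier G" "X \<subseteq> carrier G"
  shows "card {x\<in>X. x \<otimes> a \<notin> A} = card ((X <#> {a}) - A)"
proof -
  have "(X <#> {a}) - A = (\<lambda>x. x \<otimes> a) ` {x\<in>X. x \<otimes> a \<notin> A}"
    unfolding set_mult_def by auto
  moreover have "inj_on (\<lambda>x. x \<otimes> a) {x\<in>X. x \<otimes> a \<notin> A}"
    using assms by (auto simp: inj_on_def) (meson right_cancel subsetD)
  ultimately show ?thesis by (simp add: card_image)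
qed

lemma cnt_out:
  assumes "x \<in> carrier G" "A \<subseteq> carrier G" "Y \<subseteq> carrier G" "Y \<inter> A = {}" "finite A"
  shows "card {y\<in>Y. x \<otimes> y \<in> A} \<le> card (A - (x <# A))"
proof (rule card_inj_on_le[where f="\<lambda>y. x \<otimes> y"])
  show "inj_on (\<lambda>y. x \<otimes> y) {y\<in>Y. x \<otimes> y \<in> A}"
    using assms by (auto simp: inj_on_def) (metis Units_eq Units_l_cancel subsetD)
  show "(\<lambda>y. x \<otimes> y) ` {y\<in>Y. x \<otimes> y \<in> A} \<subseteq> A - (x <# A)"
  proof clarsimp
    fix y assume y: "y \<in> Y" "x \<otimes> y \<in> A" "x \<otimes> y \<in> x <# A"
    then obtain a where a: "a \<in> A" "x \<otimes> y = x \<otimes> a" unfolding l_coset_def by auto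
    then have "y = a" using assms y by (metis Units_eq Units_l_cancel subsetD)
    then show False using a y assms by auto
  qed
  show "finite (A - (x <# A))" using assms by simp
qed

lemma cnt_shift:
  assumes "a \<in> carrier G" "s \<in> carrier G" "X \<subseteq> carrier G" "A \<subseteq> carrier G" "finite A"
  shows "card {x\<in>X. x \<otimes> a \<in> A \<and> x \<otimes> (a \<otimes> s) \<notin> A} \<le> card ((A #> s) - A)"
proof (rule card_inj_on_le[where f="\<lambda>x. x \<otimes> (a \<otimes> s)"])
  show "inj_on (\<lambda>x. x \<otimes> (a \<otimes> s)) {x\<in>X. x \<otimes> a \<in> A \<and> x \<otimes> (a \<otimes> s) \<notin> A}"
    using assms by (auto simp: inj_on_def) (meson right_cancel m_closed subsetD)
  show "(\<lambda>x. x \<otimes> (a \<otimes> s)) ` {x\<in>X. x \<otimes> a \<in> A \<and> x \<otimes> (a \<otimes> s) \<notin> A} \<subseteq> (A #> s) - A"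
  proof clarsimp
    fix x assume x: "x \<in> X" "x \<otimes> a \<in> A" "x \<otimes> (a \<otimes> s) \<notin> A"
    have "x \<otimes> (a \<otimes> s) = (x \<otimes> a) \<otimes> s" using assms x by (auto simp: m_assoc)
    then show "x \<otimes> (a \<otimes> s) \<in> A #> s" using x unfolding r_coset_def by auto
  qed
  show "finite ((A #> s) - A)" using assms unfolding r_coset_def by simp
qed

end

theorem lemma3p5:
  fixes G :: "('a, 'b) monoid_scheme"
    and A D :: "'a set"
    and \<epsilon> \<nu> :: real
  assumes "group G"
    and "A \<subseteq> carrier G" and "finite A" and "A \<noteq> {}"
    and "0 < \<epsilon>" and "\<epsilon> < 1"
    and "0 < \<nu>" and "\<nu> < 1"
    and "\<nu> \<le> real (card (left_stab G (\<epsilon>^2 / 162) A)) / real (card A)"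
    and "{a \<in> A. real (card ((left_stab G (\<epsilon>^2 / 162) A <#>\<^bsub>G\<^esub> {a}) - A))
                 < \<epsilon> / 9 * real (card (left_stab G (\<epsilon>^2 / 162) A))} \<subseteq> D"
    and "D \<subseteq> {a \<in> A. real (card ((left_stab G (\<epsilon>^2 / 162) A <#>\<^bsub>G\<^esub> {a}) - A))
                 < \<epsilon> / 9 * real (card (left_stab G (\<epsilon>^2 / 162) A))}
               <#>\<^bsub>G\<^esub> right_stab G (\<epsilon> * \<nu> / 9) A"
  shows "real (card (A - D \<union> (D - A))) < \<epsilon> * real (card A)"
proof -
  interpret group G by (rule assms(1))
  define \<eta> where "\<eta> = \<epsilon>^2 / 162"
  define X where "X = left_stab G (\<epsilon>^2 / 162) A"
  define A' where "A' = {a \<in> A. real (card ((X <#>\<^bsub>G\<^esub> {a}) - A)) < \<epsilon> / 9 * real (card X)}"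
  define S where "S = right_stab G (\<epsilon> * \<nu> / 9) A"
  have AD: "A' \<subseteq> D" using assms(10) unfolding A'_def X_def .
  have DA: "D \<subseteq> A' <#>\<^bsub>G\<^esub> S" using assms(11) unfolding A'_def X_def S_def .
  have cA: "real (card A) > 0" using assms(3,4) by (simp add: card_gt_0_iff)
  have h9: "\<nu> \<le> real (card X) / real (card A)" using assms(9) unfolding X_def .
  then have "real (card X) / real (card A) > 0" using assms(7) by linarith
  then have cX: "real (card X) > 0" using cA by (simp add: zero_less_divide_iff)
  then have fX: "finite X" using card_ge_0_finite by force
  have nuX: "\<nu> * real (card A) \<le> real (card X)" using h9 cA by (simp add: field_simps)
  have Xc: "X \<subseteq> carrier G" unfolding X_def left_stab_def by auto
  have Sc: "S \<subseteq> carrier G" unfolding S_def right_stab_def by auto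
  have A'c: "A' \<subseteq> carrier G" using assms(2) unfolding A'_def by auto
  have lfin: "finite (x <#\<^bsub>G\<^esub> A)" for x
  proof -
    have "x <#\<^bsub>G\<^esub> A = (\<lambda>a. x \<otimes>\<^bsub>G\<^esub> a) ` A" by (auto simp: l_coset_def)
    then show ?thesis using assms(3) by simp
  qed
  have Xb: "real (card ((x <#\<^bsub>G\<^esub> A) - A)) \<le> \<eta> * real (card A) \<and> real (card (A - (x <#\<^bsub>G\<^esub> A))) \<le> \<eta> * real (card A)"
    if "x \<in> X" for x
  proof -
    have le: "real (card ((x <#\<^bsub>G\<^esub> A) - A \<union> (A - (x <#\<^bsub>G\<^esub> A)))) \<le> \<eta> * real (card A)"
      using that unfolding X_def left_stab_def \<eta>_def by auto
    have f: "finite ((x <#\<^bsub>G\<^esub> A) - A \<union> (A - (x <#\<^bsub>G\<^esub> A)))" using lfin assms(3) by auto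
    have "card ((x <#\<^bsub>G\<^esub> A) - A) \<le> card ((x <#\<^bsub>G\<^esub> A) - A \<union> (A - (x <#\<^bsub>G\<^esub> A)))" using f by (rule card_mono) auto
    moreover have "card (A - (x <#\<^bsub>G\<^esub> A)) \<le> card ((x <#\<^bsub>G\<^esub> A) - A \<union> (A - (x <#\<^bsub>G\<^esub> A)))" using f by (rule card_mono) auto
    ultimately show ?thesis using le by (meson of_nat_le_iff order_trans)
  qed
  show ?thesis
  proof (cases "finite D")
    case False
    have "D \<subseteq> A \<union> (A - D \<union> (D - A))" by auto
    then have "infinite (A - D \<union> (D - A))" using False assms(3) by (meson finite_UnI finite_subset)
    then show ?thesis using cA assms(5) by simp
  next
    case fD: True
    have sum1: "(\<Sum>a\<in>A. real (card {x\<in>X. x \<otimes>\<^bsub>G\<^esub> a \<notin> A})) \<le> real (card X) * (\<eta> * real (card A))"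
    proof -
      have "(\<Sum>a\<in>A. card {x\<in>X. x \<otimes>\<^bsub>G\<^esub> a \<notin> A}) = (\<Sum>x\<in>X. card {a\<in>A. x \<otimes>\<^bsub>G\<^esub> a \<notin> A})"
        by (rule double_count[OF fX assms(3), symmetric])
      then have "(\<Sum>a\<in>A. real (card {x\<in>X. x \<otimes>\<^bsub>G\<^esub> a \<notin> A})) = (\<Sum>x\<in>X. real (card {a\<in>A. x \<otimes>\<^bsub>G\<^esub> a \<notin> A}))"
        by (simp only: of_nat_sum[symmetric])
      also have "\<dots> \<le> (\<Sum>x\<in>X. \<eta> * real (card A))"
      proof (rule sum_mono)
        fix x assume "x \<in> X"
        then show "real (card {a\<in>A. x \<otimes>\<^bsub>G\<^esub> a \<notin> A}) \<le> \<eta> * real (card A)"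
          using Xb[of x] cnt_left[of x A] Xc assms(2) by auto
      qed
      finally show ?thesis by simp
    qed
    have low1: "real (card (A - A')) * (\<epsilon> / 9 * real (card X)) \<le> (\<Sum>a\<in>A. real (card {x\<in>X. x \<otimes>\<^bsub>G\<^esub> a \<notin> A}))"
    proof -
      have "real (card (A - A')) * (\<epsilon> / 9 * real (card X)) = (\<Sum>a\<in>A - A'. \<epsilon> / 9 * real (card X))" by simp
      also have "\<dots> \<le> (\<Sum>a\<in>A - A'. real (card {x\<in>X. x \<otimes>\<^bsub>G\<^esub> a \<notin> A}))"
      proof (rule sum_mono)
        fix a assume a: "a \<in> A - A'"
        then have "a \<in> carrier G" using assms(2) by auto
        then show "\<epsilon> / 9 * real (card X) \<le> real (card {x\<in>X. x \<otimes>\<^bsub>G\<^esub> a \<notin> A})"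
          using a cnt_right[of a X A] Xc unfolding A'_def by auto
      qed
      also have "\<dots> \<le> (\<Sum>a\<in>A. real (card {x\<in>X. x \<otimes>\<^bsub>G\<^esub> a \<notin> A}))"
        by (rule sum_mono2) (use assms(3) in auto)
      finally show ?thesis .
    qed
    have p1: "real (card (A - A')) \<le> \<epsilon> / 18 * real (card A)"
    proof -
      have "real (card (A - A')) * (\<epsilon> / 9) * real (card X) \<le> (\<eta> * real (card A)) * real (card X)"
        using sum1 low1 by (simp add: algebra_simps)
      then have "real (card (A - A')) * (\<epsilon> / 9) \<le> \<eta> * real (card A)"
        using cX by (simp only: mult_le_cancel_right_pos)
      then have "real (card (A - A')) * \<epsilon> \<le> 9 * (\<epsilon>^2 / 162) * real (card A)"
        unfolding \<eta>_def by (simp add: field_simps)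
      then have "real (card (A - A')) * \<epsilon> \<le> (\<epsilon> / 18 * real (card A)) * \<epsilon>"
      proof -
        have "9 * (\<epsilon>^2 / 162) * real (card A) = (\<epsilon> / 18 * real (card A)) * \<epsilon>"
          by (simp add: power2_eq_square)
        then show ?thesis using \<open>real (card (A - A')) * \<epsilon> \<le> 9 * (\<epsilon>^2 / 162) * real (card A)\<close> by linarith
      qed
      then show ?thesis using assms(5) by (simp only: mult_le_cancel_right_pos)
    qed
    have p1': "real (card (A - D)) \<le> \<epsilon> / 18 * real (card A)"
    proof -
      have "card (A - D) \<le> card (A - A')" using AD assms(3) by (intro card_mono) auto
      then show ?thesis using p1 by linarith
    qed
    define B where "B = D - A"
    have fB: "finite B" using fD unfolding B_def by simp
    have Bc: "B \<subseteq> carrier G"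
    proof -
      have "A' <#>\<^bsub>G\<^esub> S \<subseteq> carrier G" using A'c Sc unfolding set_mult_def by auto
      then show ?thesis using DA unfolding B_def by auto
    qed
    have BA: "B \<inter> A = {}" unfolding B_def by auto
    have low2: "7 / 9 * real (card X) \<le> real (card {x\<in>X. x \<otimes>\<^bsub>G\<^esub> y \<in> A})" if y: "y \<in> B" for y
    proof -
      obtain a s where as: "a \<in> A'" "s \<in> S" "y = a \<otimes>\<^bsub>G\<^esub> s"
        using y DA unfolding B_def set_mult_def by auto
      have ac: "a \<in> carrier G" and sc: "s \<in> carrier G" using as A'c Sc by auto
      have c1: "real (card {x\<in>X. x \<otimes>\<^bsub>G\<^esub> a \<notin> A}) < \<epsilon> / 9 * real (card X)"
        using as(1) cnt_right[OF ac Xc, of A] unfolding A'_def by auto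
      have "real (card ((A #>\<^bsub>G\<^esub> s) - A \<union> (A - (A #>\<^bsub>G\<^esub> s)))) \<le> \<epsilon> * \<nu> / 9 * real (card A)"
        using as(2) unfolding S_def right_stab_def by auto
      moreover have "card ((A #>\<^bsub>G\<^esub> s) - A) \<le> card ((A #>\<^bsub>G\<^esub> s) - A \<union> (A - (A #>\<^bsub>G\<^esub> s)))"
      proof (rule card_mono)
        have "A #>\<^bsub>G\<^esub> s = (\<lambda>a. a \<otimes>\<^bsub>G\<^esub> s) ` A" by (auto simp: r_coset_def)
        then show "finite ((A #>\<^bsub>G\<^esub> s) - A \<union> (A - (A #>\<^bsub>G\<^esub> s)))" using assms(3) by simp
      qed auto
      ultimately have "real (card ((A #>\<^bsub>G\<^esub> s) - A)) \<le> \<epsilon> * \<nu> / 9 * real (card A)"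
        by (meson of_nat_le_iff order_trans)
      also have "\<dots> \<le> \<epsilon> / 9 * real (card X)"
        using nuX assms(5) by (simp add: mult.assoc mult_left_mono)
      finally have c2: "real (card {x\<in>X. x \<otimes>\<^bsub>G\<^esub> a \<in> A \<and> x \<otimes>\<^bsub>G\<^esub> (a \<otimes>\<^bsub>G\<^esub> s) \<notin> A}) \<le> \<epsilon> / 9 * real (card X)"
        using cnt_shift[OF ac sc Xc assms(2,3)] by linarith
      have split: "card {x\<in>X. x \<otimes>\<^bsub>G\<^esub> a \<in> A} + card {x\<in>X. x \<otimes>\<^bsub>G\<^esub> a \<notin> A} = card X"
      proof -
        have "{x\<in>X. x \<otimes>\<^bsub>G\<^esub> a \<in> A} \<union> {x\<in>X. x \<otimes>\<^bsub>G\<^esub> a \<notin> A} = X" by auto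
        moreover have "card ({x\<in>X. x \<otimes>\<^bsub>G\<^esub> a \<in> A} \<union> {x\<in>X. x \<otimes>\<^bsub>G\<^esub> a \<notin> A}) = card {x\<in>X. x \<otimes>\<^bsub>G\<^esub> a \<in> A} + card {x\<in>X. x \<otimes>\<^bsub>G\<^esub> a \<notin> A}"
          by (rule card_Un_disjoint) (use fX in auto)
        ultimately show ?thesis by simp
      qed
      have sub: "{x\<in>X. x \<otimes>\<^bsub>G\<^esub> a \<in> A} - {x\<in>X. x \<otimes>\<^bsub>G\<^esub> a \<in> A \<and> x \<otimes>\<^bsub>G\<^esub> (a \<otimes>\<^bsub>G\<^esub> s) \<notin> A} \<subseteq> {x\<in>X. x \<otimes>\<^bsub>G\<^esub> y \<in> A}"
        using as(3) by auto
      have "card {x\<in>X. x \<otimes>\<^bsub>G\<^esub> a \<in> A} - card {x\<in>X. x \<otimes>\<^bsub>G\<^esub> a \<in> A \<and> x \<otimes>\<^bsub>G\<^esub> (a \<otimes>\<^bsub>G\<^esub> s) \<notin> A}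
            \<le> card ({x\<in>X. x \<otimes>\<^bsub>G\<^esub> a \<in> A} - {x\<in>X. x \<otimes>\<^bsub>G\<^esub> a \<in> A \<and> x \<otimes>\<^bsub>G\<^esub> (a \<otimes>\<^bsub>G\<^esub> s) \<notin> A})"
        by (rule diff_card_le_card_Diff) (use fX in auto)
      also have "\<dots> \<le> card {x\<in>X. x \<otimes>\<^bsub>G\<^esub> y \<in> A}"
        by (rule card_mono[OF _ sub]) (use fX in auto)
      finally have "card {x\<in>X. x \<otimes>\<^bsub>G\<^esub> a \<in> A} \<le> card {x\<in>X. x \<otimes>\<^bsub>G\<^esub> y \<in> A} + card {x\<in>X. x \<otimes>\<^bsub>G\<^esub> a \<in> A \<and> x \<otimes>\<^bsub>G\<^esub> (a \<otimes>\<^bsub>G\<^esub> s) \<notin> A}" by arith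
      then have c3: "real (card {x\<in>X. x \<otimes>\<^bsub>G\<^esub> a \<in> A}) \<le> real (card {x\<in>X. x \<otimes>\<^bsub>G\<^esub> y \<in> A}) + real (card {x\<in>X. x \<otimes>\<^bsub>G\<^esub> a \<in> A \<and> x \<otimes>\<^bsub>G\<^esub> (a \<otimes>\<^bsub>G\<^esub> s) \<notin> A})"
        by (simp only: of_nat_add[symmetric] of_nat_le_iff)
      have "real (card {x\<in>X. x \<otimes>\<^bsub>G\<^esub> a \<in> A}) + real (card {x\<in>X. x \<otimes>\<^bsub>G\<^esub> a \<notin> A}) = real (card X)"
        using split by (simp only: of_nat_add[symmetric])
      moreover have "\<epsilon> * real (card X) \<le> 1 * real (card X)"
        using assms(6) cX by (intro mult_right_mono) auto
      ultimately show ?thesis using c1 c2 c3 by linarith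
    qed
    have sum2: "(\<Sum>y\<in>B. real (card {x\<in>X. x \<otimes>\<^bsub>G\<^esub> y \<in> A})) \<le> real (card X) * (\<eta> * real (card A))"
    proof -
      have "(\<Sum>y\<in>B. card {x\<in>X. x \<otimes>\<^bsub>G\<^esub> y \<in> A}) = (\<Sum>x\<in>X. card {y\<in>B. x \<otimes>\<^bsub>G\<^esub> y \<in> A})"
        by (rule double_count[OF fX fB, symmetric])
      then have "(\<Sum>y\<in>B. real (card {x\<in>X. x \<otimes>\<^bsub>G\<^esub> y \<in> A})) = (\<Sum>x\<in>X. real (card {y\<in>B. x \<otimes>\<^bsub>G\<^esub> y \<in> A}))"
        by (simp only: of_nat_sum[symmetric])
      also have "\<dots> \<le> (\<Sum>x\<in>X. \<eta> * real (card A))"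
      proof (rule sum_mono)
        fix x assume x: "x \<in> X"
        then have "x \<in> carrier G" using Xc by auto
        then have "card {y\<in>B. x \<otimes>\<^bsub>G\<^esub> y \<in> A} \<le> card (A - (x <#\<^bsub>G\<^esub> A))"
          using cnt_out[of x A B] assms(2,3) Bc BA by auto
        then show "real (card {y\<in>B. x \<otimes>\<^bsub>G\<^esub> y \<in> A}) \<le> \<eta> * real (card A)"
          using Xb[OF x] by linarith
      qed
      finally show ?thesis by simp
    qed
    have "real (card B) * (7 / 9 * real (card X)) = (\<Sum>y\<in>B. 7 / 9 * real (card X))" by simp
    also have "\<dots> \<le> (\<Sum>y\<in>B. real (card {x\<in>X. x \<otimes>\<^bsub>G\<^esub> y \<in> A}))"
      by (rule sum_mono) (rule low2)
    finally have "real (card B) * (7 / 9) * real (card X) \<le> (\<eta> * real (card A)) * real (card X)"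
      using sum2 by (simp add: algebra_simps)
    then have "real (card B) * (7 / 9) \<le> \<eta> * real (card A)"
      using cX by (simp only: mult_le_cancel_right_pos)
    then have p2: "real (card (D - A)) \<le> 9 / 7 * (\<epsilon>^2 / 162) * real (card A)"
      unfolding B_def \<eta>_def by simp
    have "card (A - D \<union> (D - A)) \<le> card (A - D) + card (D - A)" by (rule card_Un_le)
    then have "real (card (A - D \<union> (D - A))) \<le> real (card (A - D)) + real (card (D - A))" by linarith
    also have "\<dots> \<le> \<epsilon> / 18 * real (card A) + 9 / 7 * (\<epsilon>^2 / 162) * real (card A)"
      using p1' p2 by linarith
    also have "\<dots> < \<epsilon> * real (card A)"
    proof -
      have "\<epsilon>^2 \<le> \<epsilon>" using assms(5,6) by (simp add: power2_eq_square)
      then have "\<epsilon> / 18 + 9 / 7 * (\<epsilon>^2 / 162) < \<epsilon>" using assms(5) by linarith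
      then have "(\<epsilon> / 18 + 9 / 7 * (\<epsilon>^2 / 162)) * real (card A) < \<epsilon> * real (card A)"
        using cA by (rule mult_strict_right_mono)
      then show ?thesis by (simp only: distrib_right)
    qed
    finally show ?thesis .
  qed
qed

end
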